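(* Let $g(x)=\sum_{k=0}^\infty a_k x^k$ be a real power series convergent for $x\in(-\varrho,\varrho)$, some $\varrho\in(0,\infty)$, put $G(y)=g(1/y)$, and let $c\in\mathbb{R}$. Then for every real $y$ with $y+c>1+\max\{1,1/\varrho\}$, $$(y+1)G(y+c)-yG(y+c-1)=a_0+\sum_{k=2}^\infty\frac{c\sum_{i=1}^{k-1}\binom{k-1}{i-1}a_i-\Bigl(\sum_{i=1}^{k-1}\binom{k}{i-1}a_i+\bigl(\binom{k}{k-1}-1\bigr)a_k\Bigr)}{(y+c)^k},$$ the series being convergent. Consequently $\lim_{y\to\infty}\bigl((y+1)G(y+c)-yG(y+c-1)\bigr)=a_0$. In particular, for every $c\in\mathbb{R}$, $$\lim_{n\to\infty}\Bigl((n+1)\Bigl(1+\frac1{n+c}\Bigr)^{n+c}-n\Bigl(1+\frac1{n+c-1}\Bigr)^{n+c-1}\Bigr)=\mathrm{e}.$$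
   Context: $\mathrm{e}$ is the base of the natural logarithm; the special case corresponds to $g(x)=(1+x)^{1/x}$ (with value $\mathrm{e}$ at $0$), whose Maclaurin series converges on $(-1,1)$ and has constant term $\mathrm{e}$, so that $G(y)=(1+1/y)^y$. *)

theory Defs
  imports Complex_Main
begin

definition pser :: "(nat \<Rightarrow> real) \<Rightarrow> real \<Rightarrow> real" where
  "pser a x = (\<Sum>k. a k * x ^ k)"

definition Gfun :: "(nat \<Rightarrow> real) \<Rightarrow> real \<Rightarrow> real" where
  "Gfun a y = pser a (1 / y)"

definition coefT :: "(nat \<Rightarrow> real) \<Rightarrow> real \<Rightarrow> nat \<Rightarrow> real" where
  "coefT a c k =
     c * (\<Sum>i=1..k-1. real ((k-1) choose (i-1)) * a i)
     - ((\<Sum>i=1..k-1. real (k choose (i-1)) * a i) + (real (k choose (k-1)) - 1) * a k)"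

end

theory Submission imports Defs "HOL-Analysis.Analysis" "HOL-Real_Asymp.Real_Asymp" begin

lemma negbin:
  fixes t :: real
  assumes "0 \<le> t" "t < 1"
  shows "(\<lambda>j. real ((k + j - 1) choose j) * t^j) sums (1/(1-t)^k)"
proof (cases "k = 0")
  case True
  have "(\<lambda>j. real ((k + j - 1) choose j) * t^j) = (\<lambda>j. if j = 0 then (\<lambda>_. 1::real) j else 0)"
    using True by (auto simp: fun_eq_iff binomial_eq_0)
  then show ?thesis using True sums_single[of 0 "\<lambda>_. 1::real"] by simp
next
  case False
  have g: "(\<lambda>n. ((- real k) gchoose n) * (-t)^n) sums (1 + -t) powr (- real k)"
    by (rule gen_binomial_real) (use assms in auto)
  have e: "((- real k) gchoose n) * (-t)^n = real ((k + n - 1) choose n) * t^n" for n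
  proof -
    have "real k + real n - 1 = real (k + n - 1)" using False by auto
    then have "((- real k) gchoose n) = (-1)^n * real ((k + n - 1) choose n)"
      by (simp only: gbinomial_minus binomial_gbinomial)
    moreover have "(-t)^n = (-1)^n * t^n" by (rule power_minus)
    ultimately show ?thesis
    proof -
      have o: "(-1::real)^n * (-1)^n = 1" by (simp flip: power_mult_distrib)
      assume h1: "((- real k) gchoose n) = (-1)^n * real ((k + n - 1) choose n)" and h2: "(-t)^n = (-1)^n * t^n"
      have "((- real k) gchoose n) * (-t)^n = ((-1::real)^n * (-1)^n) * (real ((k + n - 1) choose n) * t^n)"
        unfolding h1 h2 by (simp only: mult_ac)
      then show ?thesis unfolding o by simp
    qed
  qed
  have "(1 + -t) powr (- real k) = 1/(1-t)^k"
    using assms by (simp add: powr_minus powr_realpow divide_inverse)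
  with g e show ?thesis by (simp only:)
qed

lemma dbl:
  fixes t :: real and a :: "nat \<Rightarrow> real"
  assumes t0: "0 \<le> t" and t1: "t < 1"
    and sa: "summable (\<lambda>k. \<bar>a k\<bar> * (t/(1-t))^k)"
  shows "(\<lambda>n. (\<Sum>k\<le>n. a k * real ((n-1) choose (n-k))) * t^n) sums (\<Sum>k. a k * (t/(1-t))^k)"
proof -
  define F where "F = (\<lambda>(k,j). a k * real ((k+j-1) choose j) * t^(k+j))"
  have nb: "((\<lambda>j. real ((k+j-1) choose j) * t^j) has_sum (1/(1-t)^k)) UNIV" for k
    by (rule sums_nonneg_imp_has_sum[OF negbin]) (use t0 t1 in auto)
  have row: "((\<lambda>j. F (k,j)) has_sum (a k * (t/(1-t))^k)) UNIV" for k
  proof -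
    have "((\<lambda>j. (a k * t^k) * (real ((k+j-1) choose j) * t^j)) has_sum ((a k * t^k) * (1/(1-t)^k))) UNIV"
      by (rule has_sum_cmult_right[OF nb])
    moreover have "(\<lambda>j. (a k * t^k) * (real ((k+j-1) choose j) * t^j)) = (\<lambda>j. F (k,j))"
      by (auto simp: F_def fun_eq_iff power_add)
    moreover have "(a k * t^k) * (1/(1-t)^k) = a k * (t/(1-t))^k"
      by (simp add: power_divide)
    ultimately show ?thesis by simp
  qed
  have rowN: "((\<lambda>j. norm (F (k,j))) has_sum (\<bar>a k\<bar> * (t/(1-t))^k)) UNIV" for k
  proof -
    have "((\<lambda>j. (\<bar>a k\<bar> * t^k) * (real ((k+j-1) choose j) * t^j)) has_sum ((\<bar>a k\<bar> * t^k) * (1/(1-t)^k))) UNIV"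
      by (rule has_sum_cmult_right[OF nb])
    moreover have "(\<lambda>j. (\<bar>a k\<bar> * t^k) * (real ((k+j-1) choose j) * t^j)) = (\<lambda>j. norm (F (k,j)))"
      using t0 by (auto simp: F_def fun_eq_iff power_add abs_mult)
    moreover have "(\<bar>a k\<bar> * t^k) * (1/(1-t)^k) = \<bar>a k\<bar> * (t/(1-t))^k"
      by (simp add: power_divide)
    ultimately show ?thesis by simp
  qed
  have gs: "(\<lambda>k. \<bar>a k\<bar> * (t/(1-t))^k) summable_on UNIV"
    using sa t0 t1 by (subst summable_on_UNIV_nonneg_real_iff) auto
  have "(\<lambda>p. norm (F p)) summable_on Sigma UNIV (\<lambda>_. UNIV)"
    by (rule summable_on_SigmaI[OF rowN gs]) auto
  then have "(\<lambda>p. norm (F p)) summable_on UNIV" by simp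
  then have "F summable_on UNIV" by (rule abs_summable_summable)
  then obtain S where FS: "(F has_sum S) UNIV" using has_sum_infsum by blast
  have "((\<lambda>k. a k * (t/(1-t))^k) has_sum S) UNIV"
    using has_sum_SigmaD[where f=F and A=UNIV and B="\<lambda>_. UNIV"] FS row by auto
  then have S1: "S = (\<Sum>k. a k * (t/(1-t))^k)"
    using has_sum_imp_sums sums_unique by blast
  have FS2: "((\<lambda>(n,k). F (k, n-k)) has_sum S) (Sigma UNIV (\<lambda>n. {..n}))"
  proof -
    have "((\<lambda>(n,k). F (k, n-k)) has_sum S) (Sigma UNIV (\<lambda>n. {..n})) = (F has_sum S) UNIV"
      by (rule has_sum_reindex_bij_witness[where i="\<lambda>(k,j). (k+j,k)" and j="\<lambda>(n,k). (k, n-k)"]) auto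
    with FS show ?thesis by simp
  qed
  have "((\<lambda>n. \<Sum>k\<le>n. F (k, n-k)) has_sum S) UNIV"
    by (rule has_sum_SigmaD[OF FS2]) auto
  then have "(\<lambda>n. \<Sum>k\<le>n. F (k, n-k)) sums S" by (rule has_sum_imp_sums)
  moreover have "(\<Sum>k\<le>n. F (k, n-k)) = (\<Sum>k\<le>n. a k * real ((n-1) choose (n-k))) * t^n" for n
    by (simp add: F_def sum_distrib_right)
  ultimately show ?thesis using S1 by simp
qed

lemma Dform:
  fixes a :: "nat \<Rightarrow> real"
  assumes "n \<ge> 1"
  shows "(\<Sum>k\<le>n. a k * real ((n-1) choose (n-k))) = (\<Sum>i=1..n. real ((n-1) choose (i-1)) * a i)"
proof -
  have "{..n} = insert 0 {1..n}" by auto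
  then have "(\<Sum>k\<le>n. a k * real ((n-1) choose (n-k))) = a 0 * real ((n-1) choose n) + (\<Sum>k=1..n. a k * real ((n-1) choose (n-k)))"
    by simp
  also have "real ((n-1) choose n) = 0" using assms by (simp add: binomial_eq_0)
  also have "(\<Sum>k=1..n. a k * real ((n-1) choose (n-k))) = (\<Sum>i=1..n. real ((n-1) choose (i-1)) * a i)"
  proof (rule sum.cong)
    fix k assume "k \<in> {1..n}"
    then have "(n-1) choose (n-k) = (n-1) choose (k-1)"
      using binomial_symmetric[of "k-1" "n-1"] by auto
    then show "a k * real ((n-1) choose (n-k)) = real ((n-1) choose (k-1)) * a k" by simp
  qed simp
  finally show ?thesis by simp
qed

lemma Eform:
  fixes a :: "nat \<Rightarrow> real"
  defines "D \<equiv> \<lambda>n. (\<Sum>k\<le>n. a k * real ((n-1) choose (n-k)))"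
  shows "a (m+2) + c * (D (m+2) - a (m+2)) + (a (m+3) - D (m+3)) = coefT a c (m+2)"
proof -
  define S1 where "S1 = (\<Sum>i=1..m+1. real ((m+1) choose (i-1)) * a i)"
  define S2 where "S2 = (\<Sum>i=1..m+1. real ((m+2) choose (i-1)) * a i)"
  have d2: "D (m+2) = S1 + a (m+2)"
  proof -
    have "D (m+2) = (\<Sum>i=1..Suc (m+1). real ((m+1) choose (i-1)) * a i)"
      unfolding D_def by (subst Dform) auto
    also have "\<dots> = S1 + a (m+2)" unfolding S1_def by (subst sum.cl_ivl_Suc) auto
    finally show ?thesis .
  qed
  have d3: "D (m+3) = S2 + real (m+2) * a (m+2) + a (m+3)"
  proof -
    have "D (m+3) = (\<Sum>i=1..Suc (Suc (m+1)). real ((m+2) choose (i-1)) * a i)"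
      unfolding D_def by (subst Dform) (auto simp: numeral_eq_Suc)
    also have "\<dots> = S2 + real ((m+2) choose (m+1)) * a (m+2) + a (m+3)"
      unfolding S2_def by (simp add: sum.cl_ivl_Suc numeral_eq_Suc)
    also have "(m+2) choose (m+1) = m+2"
      using binomial_symmetric[of "m+1" "m+2"] by simp
    finally show ?thesis by simp
  qed
  have ct: "coefT a c (m+2) = c * S1 - (S2 + (real (m+2) - 1) * a (m+2))"
  proof -
    have "(m+2) choose (m+2-1) = m+2"
      using binomial_symmetric[of "m+1" "m+2"] by simp
    then show ?thesis unfolding coefT_def S1_def S2_def by (simp add: numeral_eq_Suc)
  qed
  show ?thesis unfolding d2 d3 ct by (simp add: algebra_simps)
qed

lemma part1:
  fixes a :: "nat \<Rightarrow> real" and \<rho> c y :: real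
  assumes rho_pos: "0 < \<rho>"
    and conv: "\<And>x. \<bar>x\<bar> < \<rho> \<Longrightarrow> summable (\<lambda>k. a k * x ^ k)"
    and yb: "y + c > 1 + max 1 (1 / \<rho>)"
  shows "(\<lambda>k. coefT a c (k + 2) / (y + c) ^ (k + 2)) sums
           ((y + 1) * Gfun a (y + c) - y * Gfun a (y + c - 1) - a 0)"
proof -
  define z where "z = y + c"
  define t where "t = 1 / z"
  define s where "s = 1 / (z - 1)"
  have z2: "z > 2" and z1: "z - 1 > 1 / \<rho>" using yb unfolding z_def by auto
  have t0: "0 < t" and t1: "t < 1" using z2 unfolding t_def by auto
  have s0: "0 < s" using z2 unfolding s_def by auto
  have srho: "s < \<rho>"
  proof -
    have "1 / \<rho> < z - 1" by (rule z1)
    then have "1 < \<rho> * (z - 1)" using rho_pos by (simp add: field_simps)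
    then show ?thesis unfolding s_def using z2 by (simp add: field_simps)
  qed
  have ts: "t / (1 - t) = s" unfolding t_def s_def using z2 by (simp add: field_simps)
  have zt: "z * t = 1" unfolding t_def using z2 by simp
  define s' where "s' = (s + \<rho>) / 2"
  have "summable (\<lambda>k. a k * s' ^ k)" by (rule conv) (use s0 srho in \<open>auto simp: s'_def\<close>)
  then have "summable (\<lambda>k. norm (a k * s ^ k))"
    by (rule powser_insidea) (use s0 srho in \<open>auto simp: s'_def\<close>)
  then have sa: "summable (\<lambda>k. \<bar>a k\<bar> * s ^ k)"
    using s0 by (simp add: abs_mult)
  have tlt: "t < s" unfolding t_def s_def using z2 by (simp add: field_simps)
  have "summable (\<lambda>k. a k * t ^ k)" by (rule conv) (use t0 tlt srho in auto)
  then have A: "(\<lambda>k. a k * t ^ k) sums Gfun a z"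
    unfolding Gfun_def pser_def t_def by (simp add: summable_sums)
  define D where "D = (\<lambda>n. (\<Sum>k\<le>n. a k * real ((n-1) choose (n-k))))"
  have B: "(\<lambda>n. D n * t ^ n) sums Gfun a (z - 1)"
  proof -
    have "(\<lambda>n. D n * t ^ n) sums (\<Sum>k. a k * (t/(1-t))^k)"
      unfolding D_def by (rule dbl) (use t0 t1 sa ts in auto)
    then show ?thesis unfolding ts Gfun_def pser_def s_def .
  qed
  define Ga where "Ga = Gfun a z"
  define Gb where "Gb = Gfun a (z - 1)"
  have C1: "(\<lambda>n. (a n - D n) * t ^ n) sums (Ga - Gb)"
    using sums_diff[OF A B] unfolding Ga_def Gb_def by (simp add: algebra_simps)
  have D0: "D 0 = a 0" unfolding D_def by simp
  have C2: "(\<lambda>n. (a (Suc n) - D (Suc n)) * t ^ (Suc n)) sums (Ga - Gb)"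
    using C1 D0 by (subst sums_Suc_iff) simp
  have C3: "(\<lambda>n. (a (Suc n) - D (Suc n)) * t ^ n) sums (z * (Ga - Gb))"
  proof -
    have "(\<lambda>n. z * ((a (Suc n) - D (Suc n)) * t ^ (Suc n))) sums (z * (Ga - Gb))"
      by (rule sums_mult[OF C2])
    moreover have "z * ((a (Suc n) - D (Suc n)) * t ^ (Suc n)) = (a (Suc n) - D (Suc n)) * t ^ n" for n
    proof -
      have "z * ((a (Suc n) - D (Suc n)) * t ^ (Suc n)) = (a (Suc n) - D (Suc n)) * t ^ n * (z * t)"
        by (simp add: algebra_simps)
      then show ?thesis using zt by simp
    qed
    ultimately show ?thesis by (simp only:)
  qed
  have C4: "(\<lambda>n. c * ((D n - a n) * t ^ n)) sums (c * (Gb - Ga))"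
    by (rule sums_mult) (use sums_diff[OF B A] in \<open>simp add: algebra_simps Ga_def Gb_def\<close>)
  define E where "E = (\<lambda>n. a n + c * (D n - a n) + (a (Suc n) - D (Suc n)))"
  have C5: "(\<lambda>n. E n * t ^ n) sums (Ga + c * (Gb - Ga) + z * (Ga - Gb))"
  proof -
    have "(\<lambda>n. a n * t ^ n + c * ((D n - a n) * t ^ n) + (a (Suc n) - D (Suc n)) * t ^ n) sums (Ga + c * (Gb - Ga) + z * (Ga - Gb))"
      by (intro sums_add C3 C4) (use A Ga_def in simp)
    then show ?thesis unfolding E_def by (simp add: algebra_simps)
  qed
  have L: "Ga + c * (Gb - Ga) + z * (Ga - Gb) = (y + 1) * Gfun a (y + c) - y * Gfun a (y + c - 1)"
    unfolding Ga_def Gb_def z_def by (simp add: algebra_simps)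
  have E0: "E 0 = a 0" unfolding E_def D_def by simp
  have E1: "E 1 = 0" unfolding E_def D_def by (simp add: numeral_eq_Suc atMost_Suc)
  have "(\<lambda>n. E (n + 2) * t ^ (n + 2)) sums ((y + 1) * Gfun a (y + c) - y * Gfun a (y + c - 1) - (\<Sum>i<2. E i * t ^ i))"
    using sums_split_initial_segment[OF C5, of 2] L by simp
  moreover have "(\<Sum>i<2. E i * t ^ i) = a 0" using E0 E1 by (simp add: numeral_eq_Suc)
  moreover have "E (n + 2) * t ^ (n + 2) = coefT a c (n + 2) / (y + c) ^ (n + 2)" for n
  proof -
    have "E (n + 2) = coefT a c (n + 2)"
      using Eform[of a n c] unfolding E_def D_def by (simp add: numeral_eq_Suc)
    then show ?thesis unfolding t_def z_def by (simp add: power_one_over divide_inverse power_inverse)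
  qed
  ultimately show ?thesis by simp
qed

theorem mainTheorem5:
  fixes a :: "nat \<Rightarrow> real" and \<rho> c :: real
  assumes rho_pos: "0 < \<rho>"
    and conv: "\<And>x. \<bar>x\<bar> < \<rho> \<Longrightarrow> summable (\<lambda>k. a k * x ^ k)"
  shows "(\<forall>y::real. y + c > 1 + max 1 (1 / \<rho>) \<longrightarrow>
            summable (\<lambda>k. coefT a c (k + 2) / (y + c) ^ (k + 2)) \<and>
            (y + 1) * Gfun a (y + c) - y * Gfun a (y + c - 1)
              = a 0 + (\<Sum>k. coefT a c (k + 2) / (y + c) ^ (k + 2)))
      \<and> ((\<lambda>y. (y + 1) * Gfun a (y + c) - y * Gfun a (y + c - 1)) \<longlongrightarrow> a 0) at_top
      \<and> (\<lambda>n::nat. (real n + 1) * (1 + 1 / (real n + c)) powr (real n + c)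
             - real n * (1 + 1 / (real n + c - 1)) powr (real n + c - 1))
          \<longlonglongrightarrow> exp 1"
proof (intro conjI)
  have P1: "(\<lambda>k. coefT a c (k + 2) / (y + c) ^ (k + 2)) sums
           ((y + 1) * Gfun a (y + c) - y * Gfun a (y + c - 1) - a 0)"
    if "y + c > 1 + max 1 (1 / \<rho>)" for y
    by (rule part1[OF rho_pos conv that])
  show "\<forall>y::real. y + c > 1 + max 1 (1 / \<rho>) \<longrightarrow>
            summable (\<lambda>k. coefT a c (k + 2) / (y + c) ^ (k + 2)) \<and>
            (y + 1) * Gfun a (y + c) - y * Gfun a (y + c - 1)
              = a 0 + (\<Sum>k. coefT a c (k + 2) / (y + c) ^ (k + 2))"
  proof (intro allI impI conjI)
    fix y assume "y + c > 1 + max 1 (1 / \<rho>)"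
    note h = P1[OF this]
    then show "summable (\<lambda>k. coefT a c (k + 2) / (y + c) ^ (k + 2))" by (rule sums_summable)
    from h show "(y + 1) * Gfun a (y + c) - y * Gfun a (y + c - 1)
              = a 0 + (\<Sum>k. coefT a c (k + 2) / (y + c) ^ (k + 2))"
      by (simp add: sums_iff)
  qed
  define B where "B = 1 + max 1 (1 / \<rho>)"
  have B1: "B > 1" unfolding B_def by auto
  define z0 where "z0 = B + 1"
  define K where "K = 1 / z0"
  have K0: "K > 0" unfolding K_def z0_def using B1 by auto
  define h where "h = (\<lambda>x. \<Sum>k. coefT a c (k + 2) * x ^ k)"
  have sK: "summable (\<lambda>k. coefT a c (k + 2) * K ^ k)"
  proof -
    have "summable (\<lambda>k. coefT a c (k + 2) / ((z0 - c) + c) ^ (k + 2))"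
      using P1[of "z0 - c"] unfolding z0_def B_def by (auto intro: sums_summable)
    moreover have "coefT a c (k + 2) / ((z0 - c) + c) ^ (k + 2) = K^2 * (coefT a c (k + 2) * K ^ k)" for k
      unfolding K_def by (simp add: power_one_over power_add divide_inverse power_inverse mult_ac power2_eq_square)
    ultimately have "summable (\<lambda>k. K^2 * (coefT a c (k + 2) * K ^ k))" by simp
    then show ?thesis using K0 by (simp only: summable_cmult_iff) simp
  qed
  have hc: "isCont h 0" unfolding h_def by (rule isCont_powser[OF sK]) (use K0 in simp)
  have lim0: "((\<lambda>y::real. 1 / (y + c)) \<longlongrightarrow> 0) at_top" by real_asymp
  have "((\<lambda>y. a 0 + (1 / (y + c))^2 * h (1 / (y + c))) \<longlongrightarrow> a 0 + 0^2 * h 0) at_top"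
    by (intro tendsto_intros isCont_tendsto_compose[OF hc] lim0)
  then have T: "((\<lambda>y. a 0 + (1 / (y + c))^2 * h (1 / (y + c))) \<longlongrightarrow> a 0) at_top" by simp
  have ev: "eventually (\<lambda>y. a 0 + (1 / (y + c))^2 * h (1 / (y + c)) =
      (y + 1) * Gfun a (y + c) - y * Gfun a (y + c - 1)) at_top"
    using eventually_gt_at_top[of "z0 - c"]
  proof eventually_elim
    case (elim y)
    have yB: "y + c > B" using elim unfolding z0_def by simp
    have pos: "y + c > 0" using yB B1 by simp
    have "1 / (y + c) < K" unfolding K_def using elim B1 pos unfolding z0_def
      by (simp add: field_simps)
    then have sm: "summable (\<lambda>k. coefT a c (k + 2) * (1 / (y + c)) ^ k)"
      using powser_inside[OF sK] K0 pos by simp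
    have "(\<lambda>k. (1 / (y + c))^2 * (coefT a c (k + 2) * (1 / (y + c)) ^ k)) sums ((1 / (y + c))^2 * h (1 / (y + c)))"
      unfolding h_def by (rule sums_mult[OF summable_sums[OF sm]])
    moreover have "(1 / (y + c))^2 * (coefT a c (k + 2) * (1 / (y + c)) ^ k) = coefT a c (k + 2) / (y + c) ^ (k + 2)" for k
      by (simp add: power_one_over power_add divide_inverse power_inverse mult_ac power2_eq_square)
    ultimately have "(\<lambda>k. coefT a c (k + 2) / (y + c) ^ (k + 2)) sums ((1 / (y + c))^2 * h (1 / (y + c)))"
      by simp
    moreover have "(\<lambda>k. coefT a c (k + 2) / (y + c) ^ (k + 2)) sums
           ((y + 1) * Gfun a (y + c) - y * Gfun a (y + c - 1) - a 0)"
      by (rule P1) (use yB B_def in simp)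
    ultimately show ?case using sums_unique2 by fastforce
  qed
  show "((\<lambda>y. (y + 1) * Gfun a (y + c) - y * Gfun a (y + c - 1)) \<longlongrightarrow> a 0) at_top"
    using tendsto_cong[OF ev] T by simp
  show "(\<lambda>n::nat. (real n + 1) * (1 + 1 / (real n + c)) powr (real n + c)
             - real n * (1 + 1 / (real n + c - 1)) powr (real n + c - 1))
          \<longlonglongrightarrow> exp 1"
    by real_asymp
qed

end
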